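(* Let $q\in\mathbb{C}$ with $|q|<1$, $r\in\mathbb{N}$, $n\in\mathbb{Z}_{+}=\{0,1,2,\dots\}$, $x$ real with $x\neq0,-1,-2,\dots$, and let $\chi$ be a Dirichlet character with conductor $f\in\mathbb{N}$, $f$ odd. Then $$E_{n,\chi,q}^{(r)}(x)=[f]_q^n\left(\frac{[2]_q}{[2]_{q^f}}\right)^r\sum_{a_1,\dots,a_r=0}^{f-1}\left(\prod_{j=1}^r\chi(a_j)\right)(-1)^{\sum_{j=1}^r a_j}E_{n,q^f}^{(r)}\!\left(\frac{x+\sum_{j=1}^r a_j}{f}\right),$$ and $$E_{n,\chi,q}^{(r)}(x)=\frac{[2]_q^r}{(1-q)^n}\sum_{l=0}^{n}\binom{n}{l}(-q^x)^l\sum_{a_1,\dots,a_r=0}^{f-1}\frac{\left(\prod_{j=1}^r\chi(a_j)\right)(-q^l)^{\sum_{i=1}^r a_i}}{(1+q^{lf})^r}.$$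
   Context: For a complex number $q$ with $|q|<1$ and $x$ real, $[x]_q=\frac{1-q^x}{1-q}$ (so $[2]_q=1+q$). For $r\in\mathbb{N}$, the $q$-Euler polynomials of order $r$ are defined by $$[2]_q^r\sum_{m_1,\dots,m_r=0}^{\infty}(-1)^{m_1+\cdots+m_r}e^{[m_1+\cdots+m_r+x]_q t}=\sum_{n=0}^{\infty}E_{n,q}^{(r)}(x)\frac{t^n}{n!},$$ with $E_{n,q^f}^{(r)}$ the same with $q$ replaced by $q^f$. The generalized $q$-Euler polynomials of order $r$ attached to $\chi$ are defined by $$[2]_q^r\sum_{m_1,\dots,m_r=0}^{\infty}(-1)^{m_1+\cdots+m_r}\left(\prod_{j=1}^r\chi(m_j)\right)e^{[x+m_1+\cdots+m_r]_q t}=\sum_{n=0}^{\infty}E_{n,\chi,q}^{(r)}(x)\frac{t^n}{n!}.$$ *)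

theory Defs
  imports "HOL-Analysis.Analysis" "HOL-Number_Theory.Cong"
begin

text \<open>The base q is represented through a chosen logarithm L (q = exp L), so that
  q^x = exp (x L) for real x, and (q^f)^y = exp (y f L) consistently.\<close>

definition qpow :: "complex \<Rightarrow> real \<Rightarrow> complex" where
  "qpow L x = exp (complex_of_real x * L)"

definition qnum :: "complex \<Rightarrow> real \<Rightarrow> complex" where
  "qnum L x = (1 - qpow L x) / (1 - exp L)"

text \<open>q-Euler polynomials of order r; the (divergent) alternating series defining the
  t^n coefficient of the generating function is read in the Abel sense.\<close>
definition q_euler :: "complex \<Rightarrow> nat \<Rightarrow> nat \<Rightarrow> real \<Rightarrow> complex" where
  "q_euler L r n x = qnum L 2 ^ r *
     Lim (at_left (1::real))
       (\<lambda>z. infsum (\<lambda>m. (- complex_of_real z) ^ (\<Sum>j<r. m j)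
                           * qnum L (x + real (\<Sum>j<r. m j)) ^ n)
                 (PiE {..<r} (\<lambda>_. UNIV)))"

definition q_euler_chi :: "complex \<Rightarrow> nat \<Rightarrow> (nat \<Rightarrow> complex) \<Rightarrow> nat \<Rightarrow> real \<Rightarrow> complex" where
  "q_euler_chi L r chi n x = qnum L 2 ^ r *
     Lim (at_left (1::real))
       (\<lambda>z. infsum (\<lambda>m. (- complex_of_real z) ^ (\<Sum>j<r. m j) * (\<Prod>j<r. chi (m j))
                           * qnum L (x + real (\<Sum>j<r. m j)) ^ n)
                 (PiE {..<r} (\<lambda>_. UNIV)))"

definition dirichlet_char :: "nat \<Rightarrow> (nat \<Rightarrow> complex) \<Rightarrow> bool" where
  "dirichlet_char f chi \<longleftrightarrow> f > 0 \<and> chi 1 = 1 \<and>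
     (\<forall>a b. chi (a * b) = chi a * chi b) \<and>
     (\<forall>a. chi (a + f) = chi a) \<and>
     (\<forall>a. chi a \<noteq> 0 \<longleftrightarrow> coprime a f)"

text \<open>chi has conductor f: it is a primitive character modulo f, i.e. not induced by a
  character of any proper divisor modulus d of f.\<close>
definition has_conductor :: "(nat \<Rightarrow> complex) \<Rightarrow> nat \<Rightarrow> bool" where
  "has_conductor chi f \<longleftrightarrow> dirichlet_char f chi \<and>
     (\<forall>d. d dvd f \<and> d < f \<longrightarrow> (\<exists>a. coprime a f \<and> [a = 1] (mod d) \<and> chi a \<noteq> 1))"

end

theory Submission imports Defs begin

lemma periodic_mod:
  fixes c :: "nat \<Rightarrow> 'b" and k :: nat
  assumes "p > 0" "\<And>k. c (k+p) = c k"
  shows "c k = c (k mod p)"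
proof (induction k rule: less_induct)
  case (less k)
  show ?case
  proof (cases "k < p")
    case True then show ?thesis by simp
  next
    case False
    then have "k = (k-p) + p" by simp
    then have "c k = c (k-p)" using assms(2) by metis
    also have "\<dots> = c ((k-p) mod p)" using less assms(1) False by simp
    also have "(k-p) mod p = k mod p" using False by (simp add: mod_if)
    finally show ?thesis .
  qed
qed

lemma geom_periodic:
  fixes c :: "nat \<Rightarrow> complex" and w :: complex
  assumes w: "norm w < 1" and p: "p > 0" and per: "\<And>k. c (k+p) = c k"
  shows "summable (\<lambda>k. norm (c k * w^k))"
    and "(\<lambda>k. c k * w^k) sums ((\<Sum>a<p. c a * w^a) / (1 - w^p))"
proof -
  define B where "B = (\<Sum>a<p. norm (c a))"
  have cb: "norm (c k) \<le> B" for k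
  proof -
    have "c k = c (k mod p)" using periodic_mod[of p c k] p per by blast
    moreover have "k mod p \<in> {..<p}" using p by simp
    ultimately show ?thesis unfolding B_def
      by (metis (no_types, lifting) finite_lessThan member_le_sum norm_ge_zero)
  qed
  have "summable (\<lambda>k. B * norm w ^ k)"
    using w by (intro summable_mult summable_geometric) auto
  then show sm: "summable (\<lambda>k. norm (c k * w^k))"
    by (rule summable_comparison_test[rotated])
       (auto simp: norm_mult norm_power intro!: mult_right_mono cb)
  then have sm': "summable (\<lambda>k. c k * w^k)" by (rule summable_norm_cancel)
  define S where "S = (\<Sum>k. c k * w^k)"
  have "S = (\<Sum>k. c (k+p) * w^(k+p)) + (\<Sum>a<p. c a * w^a)"
    unfolding S_def by (rule suminf_split_initial_segment[OF sm'])
  also have "(\<Sum>k. c (k+p) * w^(k+p)) = w^p * S"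
    unfolding S_def using suminf_mult[OF sm', of "w^p"]
    by (simp add: per power_add algebra_simps)
  finally have "S * (1 - w^p) = (\<Sum>a<p. c a * w^a)" by (simp add: algebra_simps)
  moreover have "1 - w^p \<noteq> 0"
  proof
    assume "1 - w^p = 0"
    then have "norm (w^p) = 1" by simp
    moreover have "norm (w^p) < 1" using w p by (simp add: norm_power power_less_one_iff)
    ultimately show False by simp
  qed
  ultimately have "S = (\<Sum>a<p. c a * w^a) / (1 - w^p)" by (simp add: field_simps)
  then show "(\<lambda>k. c k * w^k) sums ((\<Sum>a<p. c a * w^a) / (1 - w^p))"
    using sm' S_def summable_sums by metis
qed

lemma has_sum_nat_norm:
  fixes g :: "nat \<Rightarrow> complex"
  assumes "summable (\<lambda>k. norm (g k))" "g sums G"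
  shows "(g has_sum G) UNIV" "(\<lambda>k. norm (g k)) summable_on UNIV"
  using norm_summable_imp_has_sum[OF assms] apply simp
  using norm_summable_imp_summable_on[of "\<lambda>k. norm (g k)"] assms(1) by simp

lemma has_sum_PiE_pow:
  fixes g :: "nat \<Rightarrow> complex"
  assumes "summable (\<lambda>k. norm (g k))" "g sums G"
  shows "((\<lambda>m. \<Prod>j<r. g (m j)) has_sum (G ^ r)) (PiE {..<r} (\<lambda>_. UNIV))"
proof -
  note h = has_sum_nat_norm[OF assms]
  have "Infinite_Set_Sum.abs_summable_on (\<lambda>m. \<Prod>j<r. g (m j)) (PiE {..<r} (\<lambda>_. UNIV))"
    by (rule abs_summable_on_prod_PiE) (use h in \<open>auto simp: abs_summable_equivalent[symmetric]\<close>)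
  then have s: "(\<lambda>m. \<Prod>j<r. g (m j)) summable_on (PiE {..<r} (\<lambda>_. UNIV))"
    by (simp add: abs_summable_equivalent[symmetric] abs_summable_summable)
  have "infsum (\<lambda>m. \<Prod>j<r. g (m j)) (PiE {..<r} (\<lambda>_. UNIV)) = (\<Prod>j<r. infsum g UNIV)"
    by (rule infsum_prod_PiE_abs) (use h in auto)
  also have "\<dots> = G ^ r" using h(1) by (simp add: infsumI)
  finally show ?thesis using s has_sum_iff by blast
qed

lemma has_sum_finsum:
  fixes F :: "nat \<Rightarrow> 'a \<Rightarrow> complex"
  assumes "finite I" "\<And>i. i \<in> I \<Longrightarrow> (F i has_sum s i) A"
  shows "((\<lambda>m. \<Sum>i\<in>I. F i m) has_sum (\<Sum>i\<in>I. s i)) A"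
  using assms by (induction I rule: finite_induct) (auto intro: has_sum_add)

lemma term_expand:
  fixes L :: complex and c :: "nat \<Rightarrow> complex" and x z :: real and m :: "nat \<Rightarrow> nat"
  assumes "exp L \<noteq> 1"
  shows "(- complex_of_real z) ^ (\<Sum>j<r. m j) * (\<Prod>j<r. c (m j)) * qnum L (x + real (\<Sum>j<r. m j)) ^ n
    = (\<Sum>l=0..n. ((1/(1-exp L))^n * of_nat (n choose l) * (- qpow L x)^l) *
          (\<Prod>j<r. c (m j) * (- complex_of_real z * exp L ^ l) ^ (m j)))"
proof -
  define s where "s = (\<Sum>j<r. m j)"
  define Q where "Q = exp L"
  define u where "u = qpow L x"
  have qp: "qpow L (x + real s) = u * Q ^ s"
    proof -
    have "exp (complex_of_real (x + real s) * L) = exp (complex_of_real x * L) * exp (of_nat s * L)"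
      by (simp add: distrib_right exp_add)
    then show ?thesis unfolding qpow_def u_def Q_def by (simp add: exp_of_nat_mult)
  qed
  have "qnum L (x + real s) ^ n = (1/(1-Q))^n * (1 - u * Q^s)^n"
    unfolding qnum_def qp Q_def by (simp add: power_divide divide_simps)
  also have "(1 - u * Q^s)^n = (\<Sum>l=0..n. of_nat (n choose l) * (- u * Q^s)^l)"
    using binomial_ring[of "- u * Q^s" 1 n] by (simp add: atLeast0AtMost)
  finally have e0: "qnum L (x + real s) ^ n = (1/(1-Q))^n * (\<Sum>l=0..n. of_nat (n choose l) * (- u * Q^s)^l)" .
  have pq: "(Q^s)^l = (Q^l)^s" for l by (simp add: power_mult[symmetric] mult.commute)
  have e1: "qnum L (x + real s) ^ n = (\<Sum>l=0..n. (1/(1-Q))^n * of_nat (n choose l) * (- u)^l * (Q^l)^s)"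
    unfolding e0 sum_distrib_left
  proof (intro sum.cong refl)
    fix l
    have "(- u * Q^s)^l = (-u)^l * (Q^l)^s" unfolding power_mult_distrib pq ..
    then show "(1/(1-Q))^n * (of_nat (n choose l) * (- u * Q^s)^l) = (1/(1-Q))^n * of_nat (n choose l) * (- u)^l * (Q^l)^s"
      by (simp add: mult_ac)
  qed
  have e2: "(\<Prod>j<r. c (m j) * (- complex_of_real z * Q ^ l) ^ (m j)) = (\<Prod>j<r. c (m j)) * (- complex_of_real z)^s * (Q^l)^s" for l
  proof -
    have "(\<Prod>j<r. c (m j) * (- complex_of_real z * Q ^ l) ^ (m j)) = (\<Prod>j<r. c (m j)) * (- complex_of_real z * Q ^ l) ^ s"
      unfolding s_def power_sum prod.distrib ..
    then show ?thesis by (simp only: power_mult_distrib mult.assoc)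
  qed
  show ?thesis
    unfolding s_def[symmetric] Q_def[symmetric] u_def[symmetric] e1 e2
    by (simp add: sum_distrib_left mult_ac)
qed

lemma main:
  fixes L :: complex and c :: "nat \<Rightarrow> complex" and x :: real
  assumes Q: "norm (exp L) < 1" and p: "p > 0" "odd p" and per: "\<And>k. c (k+p) = c k"
  shows "Lim (at_left (1::real)) (\<lambda>z. infsum (\<lambda>m. (- complex_of_real z) ^ (\<Sum>j<r. m j) * (\<Prod>j<r. c (m j))
            * qnum L (x + real (\<Sum>j<r. m j)) ^ n) (PiE {..<r} (\<lambda>_. UNIV)))
   = (1/(1-exp L))^n * (\<Sum>l=0..n. of_nat (n choose l) * (- qpow L x)^l *
        ((\<Sum>a<p. c a * (-(exp L^l))^a) / (1 + exp L^(l*p)))^r)"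
proof -
  define Q where "Q = exp L"
  have Q1: "Q \<noteq> 1" using Q unfolding Q_def by (metis norm_one less_irrefl)
  define W where "W = (\<lambda>(z::real) l. - complex_of_real z * Q ^ l)"
  define G where "G = (\<lambda>z. \<Sum>l=0..n. ((1/(1-Q))^n * of_nat (n choose l) * (- qpow L x)^l) *
          ((\<Sum>a<p. c a * W z l ^ a) / (1 - W z l ^ p)) ^ r)"
  define F where "F = (\<lambda>z. infsum (\<lambda>m. (- complex_of_real z) ^ (\<Sum>j<r. m j) * (\<Prod>j<r. c (m j))
            * qnum L (x + real (\<Sum>j<r. m j)) ^ n) (PiE {..<r} (\<lambda>_. UNIV)))"
  have FG: "F z = G z" if z: "0 < z" "z < 1" for z
  proof -
    have hs: "((\<lambda>m. \<Prod>j<r. c (m j) * W z l ^ (m j)) has_sum ((\<Sum>a<p. c a * W z l ^ a) / (1 - W z l ^ p)) ^ r)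
               (PiE {..<r} (\<lambda>_. UNIV))" for l
    proof -
      have "norm (W z l) < 1"
      proof -
        have "norm (W z l) = z * norm Q ^ l" using z by (simp add: W_def norm_mult norm_power)
        also have "\<dots> \<le> z * 1" using Q z unfolding Q_def
          by (intro mult_left_mono power_le_one) auto
        finally show ?thesis using z by simp
      qed
      note g = geom_periodic[of "W z l" p c, OF this p(1) per]
      show ?thesis by (rule has_sum_PiE_pow[OF g(1) g(2)])
    qed
    have "((\<lambda>m. \<Sum>l=0..n. ((1/(1-Q))^n * of_nat (n choose l) * (- qpow L x)^l) *
          (\<Prod>j<r. c (m j) * W z l ^ (m j))) has_sum G z) (PiE {..<r} (\<lambda>_. UNIV))"
      unfolding G_def by (intro has_sum_finsum has_sum_cmult_right hs) auto
    moreover have eq: "(- complex_of_real z) ^ (\<Sum>j<r. m j) * (\<Prod>j<r. c (m j))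
            * qnum L (x + real (\<Sum>j<r. m j)) ^ n = (\<Sum>l=0..n. ((1/(1-Q))^n * of_nat (n choose l) * (- qpow L x)^l) *
          (\<Prod>j<r. c (m j) * W z l ^ (m j)))" for m
      unfolding W_def Q_def by (rule term_expand[OF Q1[unfolded Q_def]])
    ultimately have "((\<lambda>m. (- complex_of_real z) ^ (\<Sum>j<r. m j) * (\<Prod>j<r. c (m j))
            * qnum L (x + real (\<Sum>j<r. m j)) ^ n) has_sum G z) (PiE {..<r} (\<lambda>_. UNIV))"
      by (simp only: eq)
    then show ?thesis unfolding F_def by (simp add: infsumI)
  qed
  have nz: "1 - W 1 l ^ p \<noteq> 0" for l
  proof -
    have "W 1 l ^ p = - (Q ^ (l*p))" using p(2) by (simp add: W_def power_minus_odd power_mult)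
    moreover have "1 + Q ^ (l*p) \<noteq> 0"
    proof (cases "l = 0")
      case True then show ?thesis by simp
    next
      case False
      then have "norm (Q ^ (l*p)) < 1" using Q p unfolding Q_def by (simp add: norm_power power_less_one_iff)
      then show ?thesis by (metis add.commute add_eq_0_iff norm_minus_cancel norm_one order_less_irrefl)
    qed
    ultimately show ?thesis by simp
  qed
  have cont: "(G \<longlongrightarrow> G 1) (at_left 1)"
    unfolding G_def W_def
    by (intro tendsto_intros) (use nz in \<open>auto simp: W_def\<close>)
  have ev: "eventually (\<lambda>z. G z = F z) (at_left (1::real))"
  proof -
    have "eventually (\<lambda>z. z \<in> {0<..<(1::real)}) (at_left 1)" by (rule eventually_at_left_real) simp
    then show ?thesis by eventually_elim (auto simp: FG)
  qed
  have "(F \<longlongrightarrow> G 1) (at_left 1)"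
    using tendsto_cong[OF ev] cont by simp
  then have "Lim (at_left (1::real)) F = G 1" by (intro tendsto_Lim) auto
  also have "G 1 = (1/(1-exp L))^n * (\<Sum>l=0..n. of_nat (n choose l) * (- qpow L x)^l *
        ((\<Sum>a<p. c a * (-(exp L^l))^a) / (1 + exp L^(l*p)))^r)"
    unfolding G_def W_def Q_def using p(2)
    by (simp add: sum_distrib_left power_minus_odd power_mult mult_ac)
  finally show ?thesis unfolding F_def .
qed


lemma pow_PiE:
  fixes h :: "nat \<Rightarrow> complex"
  shows "(\<Sum>a<f. h a)^r = (\<Sum>g\<in>PiE {..<r} (\<lambda>_. {..<f}). \<Prod>j<r. h (g j))"
proof -
  have "(\<Sum>a<f. h a)^r = (\<Prod>j<r. \<Sum>a<f. h a)" by simp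
  also have "\<dots> = (\<Sum>g\<in>PiE {..<r} (\<lambda>_. {..<f}). \<Prod>j<r. h (g j))" by (rule prod_sum_PiE) auto
  finally show ?thesis .
qed

theorem theorem5:
  fixes q :: complex and r n f :: nat and x :: real and chi :: "nat \<Rightarrow> complex"
  assumes "norm q < 1" and "q \<noteq> 0" and "r \<ge> 1"
    and "\<forall>k::nat. x \<noteq> - real k"
    and "has_conductor chi f" and "odd f"
  shows "q_euler_chi (Ln q) r chi n x =
           qnum (Ln q) (real f) ^ n * (qnum (Ln q) 2 / qnum (of_nat f * Ln q) 2) ^ r *
           (\<Sum>a\<in>PiE {..<r} (\<lambda>_. {..<f}).
              (\<Prod>j<r. chi (a j)) * (-1) ^ (\<Sum>j<r. a j) *
              q_euler (of_nat f * Ln q) r n ((x + real (\<Sum>j<r. a j)) / real f))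
       \<and> q_euler_chi (Ln q) r chi n x =
           qnum (Ln q) 2 ^ r / (1 - q) ^ n *
           (\<Sum>l=0..n. of_nat (n choose l) * (- qpow (Ln q) x) ^ l *
              (\<Sum>a\<in>PiE {..<r} (\<lambda>_. {..<f}).
                 (\<Prod>j<r. chi (a j)) * (- (q ^ l)) ^ (\<Sum>i<r. a i)
                 / (1 + q ^ (l * f)) ^ r))"
proof -
  define L where "L = Ln q"
  have eL: "exp L = q" using assms(2) by (simp add: L_def)
  from assms(5) have f0: "f > 0" and per: "\<And>k. chi (k+f) = chi k"
    unfolding has_conductor_def dirichlet_char_def by auto
  have nq: "norm (exp L) < 1" using eL assms(1) by simp
  have q1: "1 - q \<noteq> 0" using assms(1) by auto
  define A where "A = qpow L x"
  define T where "T = (\<lambda>l::nat. \<Sum>a\<in>PiE {..<r} (\<lambda>_. {..<f}). (\<Prod>j<r. chi (a j)) * (-(q^l))^(\<Sum>i<r. a i) / (1 + q^(l*f)) ^ r)"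
  define RHS2 where "RHS2 = qnum L 2 ^ r / (1-q)^n * (\<Sum>l=0..n. of_nat (n choose l) * (- A)^l * T l)"
  have C: "q_euler_chi L r chi n x = RHS2"
  proof -
    have pw: "((\<Sum>a<f. chi a * (-(q^l))^a) / (1 + q^(l*f)))^r = T l" for l
    proof -
      have "((\<Sum>a<f. chi a * (-(q^l))^a) / (1 + q^(l*f)))^r = (\<Sum>a<f. chi a * (-(q^l))^a / (1 + q^(l*f)))^r"
        by (simp add: sum_divide_distrib)
      also have "\<dots> = (\<Sum>g\<in>PiE {..<r} (\<lambda>_. {..<f}). \<Prod>j<r. chi (g j) * (-(q^l))^(g j) / (1 + q^(l*f)))"
        by (rule pow_PiE)
      also have "\<dots> = T l" unfolding T_def
        by (intro sum.cong refl) (simp add: prod_dividef prod.distrib power_sum)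
      finally show ?thesis .
    qed
    have "q_euler_chi L r chi n x = qnum L 2 ^ r * ((1/(1-exp L))^n * (\<Sum>l=0..n. of_nat (n choose l) * (- qpow L x)^l *
        ((\<Sum>a<f. chi a * (-(exp L^l))^a) / (1 + exp L^(l*f)))^r))"
      unfolding q_euler_chi_def main[where c=chi and p=f and L=L and r=r and x=x and n=n, OF nq f0 assms(6) per] ..
    then show ?thesis unfolding RHS2_def A_def by (simp add: eL pw power_one_over)
  qed
  define L' where "L' = of_nat f * L"
  have eL': "exp L' = q^f" unfolding L'_def by (simp add: exp_of_nat_mult eL)
  have nq': "norm (exp L') < 1" using eL' assms(1) f0 by (simp add: norm_power power_less_one_iff)
  have qf: "(q^f)^l = q^(l*f)" for l by (simp add: power_mult[symmetric] mult.commute)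
  have per1: "\<And>k. (\<lambda>_. 1::complex) (k+1) = (\<lambda>_. 1) k" by simp
  have E: "q_euler L' r n y = qnum L' 2 ^ r * ((1/(1-q^f))^n * (\<Sum>l=0..n. of_nat (n choose l) * (- qpow L' y)^l * (1/(1+q^(l*f)))^r))" for y
  proof -
    have "q_euler L' r n y = q_euler_chi L' r (\<lambda>_. 1) n y" unfolding q_euler_def q_euler_chi_def by simp
    also have "\<dots> = qnum L' 2 ^ r * ((1/(1-exp L'))^n * (\<Sum>l=0..n. of_nat (n choose l) * (- qpow L' y)^l *
        ((\<Sum>a<1. (\<lambda>_. 1) a * (-(exp L'^l))^a) / (1 + exp L'^(l*1)))^r))"
      unfolding q_euler_chi_def main[where c="\<lambda>_. 1" and p=1 and L=L' and r=r and x=y and n=n, OF nq' zero_less_one odd_one per1] ..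
    also have "\<dots> = qnum L' 2 ^ r * ((1/(1-q^f))^n * (\<Sum>l=0..n. of_nat (n choose l) * (- qpow L' y)^l * (1/(1+q^(l*f)))^r))"
      by (simp add: eL' qf) 
    finally show ?thesis .
  qed
  have qpa: "qpow L' ((x + real s)/real f) = A * q^s" for s :: nat
  proof -
    have "complex_of_real ((x + real s)/real f) * L' = complex_of_real x * L + of_nat s * L"
      unfolding L'_def using f0 by (simp add: field_simps) 
    then show ?thesis unfolding qpow_def A_def by (simp add: exp_add exp_of_nat_mult eL) 
  qed
  have k1: "qnum L (real f) = (1 - q^f) / (1 - q)"
  proof -
    have "exp (complex_of_real (real f) * L) = q^f" by (simp add: exp_of_nat_mult eL)
    then show ?thesis unfolding qnum_def qpow_def eL by simp 
  qed
  have qf1: "1 - q^f \<noteq> 0" using eL' nq' by auto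
  have k2: "qnum L' 2 \<noteq> 0"
  proof -
    have "exp (complex_of_real 2 * L') = (q^f)^2" using exp_of_nat_mult[of 2 L'] eL' by simp 
    moreover have "1 - (q^f)^2 \<noteq> 0"
    proof
      assume "1 - (q^f)^2 = 0"
      then have "norm ((q^f)^2) = 1" by simp
      moreover have "norm ((q^f)^2) < 1" using nq' eL' by (simp add: norm_power power_less_one_iff)
      ultimately show False by simp
    qed
    ultimately show ?thesis unfolding qnum_def qpow_def using qf1 eL' by simp 
  qed
  have per_a: "(\<Prod>j<r. chi (a j)) * (-1)^(\<Sum>j<r. a j) * q_euler L' r n ((x + real (\<Sum>j<r. a j))/real f)
     = qnum L' 2 ^ r * (1/(1-q^f))^n * (\<Sum>l=0..n. of_nat (n choose l) * (-A)^l *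
         ((\<Prod>j<r. chi (a j)) * (-(q^l))^(\<Sum>i<r. a i) / (1+q^(l*f))^r))" for a
  proof -
    define s where "s = (\<Sum>j<r. a j)"
    define P where "P = (\<Prod>j<r. chi (a j))"
    have t: "(P * (-1)^s) * (of_nat (n choose l) * (- (A * q^s))^l * (1/(1+q^(l*f)))^r)
       = of_nat (n choose l) * (-A)^l * (P * (-(q^l))^s / (1+q^(l*f))^r)" for l
    proof -
      have a1: "(- (A * q^s))^l = (-A)^l * (q^l)^s"
        by (simp only: minus_mult_left power_mult_distrib power_mult[symmetric] mult.commute)
      have a2: "(-(q^l))^s = (-1)^s * (q^l)^s" by (rule power_minus)
      show ?thesis unfolding a1 a2 by (simp add: power_one_over divide_inverse power_inverse mult_ac) 
    qed
    have "P * (-1)^s * q_euler L' r n ((x + real s)/real f)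
        = qnum L' 2 ^ r * (1/(1-q^f))^n * (\<Sum>l=0..n. (P * (-1)^s) * (of_nat (n choose l) * (- (A * q^s))^l * (1/(1+q^(l*f)))^r))"
      unfolding E qpa by (simp add: sum_distrib_left mult_ac) 
    also have "\<dots> = qnum L' 2 ^ r * (1/(1-q^f))^n * (\<Sum>l=0..n. of_nat (n choose l) * (-A)^l * (P * (-(q^l))^s / (1+q^(l*f))^r))"
      unfolding t ..
    finally show ?thesis unfolding s_def P_def .
  qed
  have "qnum L (real f) ^ n * (qnum L 2 / qnum L' 2) ^ r *
           (\<Sum>a\<in>PiE {..<r} (\<lambda>_. {..<f}).
              (\<Prod>j<r. chi (a j)) * (-1) ^ (\<Sum>j<r. a j) *
              q_euler L' r n ((x + real (\<Sum>j<r. a j)) / real f))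
      = qnum L (real f) ^ n * (qnum L 2 / qnum L' 2) ^ r * (qnum L' 2 ^ r * (1/(1-q^f))^n) *
          (\<Sum>a\<in>PiE {..<r} (\<lambda>_. {..<f}). \<Sum>l=0..n. of_nat (n choose l) * (-A)^l *
           ((\<Prod>j<r. chi (a j)) * (-(q^l))^(\<Sum>i<r. a i) / (1+q^(l*f))^r))"
    unfolding per_a by (simp add: sum_distrib_left mult_ac) 
  also have "\<dots> = RHS2"
  proof -
    have "qnum L (real f) ^ n * (qnum L 2 / qnum L' 2) ^ r * (qnum L' 2 ^ r * (1/(1-q^f))^n) = qnum L 2 ^ r / (1-q)^n"
      using k2 qf1 q1 unfolding k1 by (simp add: power_divide field_simps) 
    moreover have "(\<Sum>a\<in>PiE {..<r} (\<lambda>_. {..<f}). \<Sum>l=0..n. of_nat (n choose l) * (-A)^l *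
           ((\<Prod>j<r. chi (a j)) * (-(q^l))^(\<Sum>i<r. a i) / (1+q^(l*f))^r))
         = (\<Sum>l=0..n. of_nat (n choose l) * (- A)^l * T l)"
      unfolding T_def by (subst sum.swap) (simp add: sum_distrib_left) 
    ultimately show ?thesis unfolding RHS2_def by simp
  qed
  finally have P1: "qnum L (real f) ^ n * (qnum L 2 / qnum L' 2) ^ r *
           (\<Sum>a\<in>PiE {..<r} (\<lambda>_. {..<f}).
              (\<Prod>j<r. chi (a j)) * (-1) ^ (\<Sum>j<r. a j) *
              q_euler L' r n ((x + real (\<Sum>j<r. a j)) / real f)) = RHS2" .
  note C2 = C[unfolded RHS2_def A_def T_def]
  show ?thesis unfolding L_def[symmetric] L'_def[symmetric]
    apply (rule conjI)
     apply (subst C) apply (rule P1[symmetric])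
    by (rule C2) 
qed

end
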